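(* For every real $x>1/4$, $$\sum_{k=0}^\infty\frac1{x^{2k}\binom{4k}{2k}}=\frac{16x^2}{16x^2-1}+2x\left(\frac{\operatorname{arccot}\sqrt{4x-1}}{(4x-1)\sqrt{4x-1}}-\frac{\operatorname{arccoth}\sqrt{4x+1}}{(4x+1)\sqrt{4x+1}}\right).$$
   Context: For $y>0$, $\operatorname{arccot}y=\arctan(1/y)$; for $y>1$, $\operatorname{arccoth}y=\operatorname{arctanh}(1/y)=\frac12\log\frac{y+1}{y-1}$. *)

theory Defs
  imports "HOL-Analysis.Analysis"
begin

definition arccot :: "real \<Rightarrow> real" where
  "arccot y = arctan (1 / y)"

definition arccoth :: "real \<Rightarrow> real" where
  "arccoth y = artanh (1 / y)"

end

theory Submission
  imports Defs
begin

lemma L1: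
  fixes c s :: real assumes "c > 0"
  shows "((\<lambda>s. s/(s^2+c^2)) has_real_derivative (c^2-s^2)/(s^2+c^2)^2) (at s within A)"
proof -
  have K: "s^2+c^2 > 0" using assms by (simp add: add_nonneg_pos)
  have d: "((\<lambda>s. s/(s^2+c^2)) has_real_derivative (1 * (s^2 + c^2) - s * (2 * s)) / ((s^2 + c^2) * (s^2 + c^2))) (at s within A)"
    apply (rule DERIV_divide)
      apply (rule DERIV_ident)
     apply (rule DERIV_cong)
      apply (rule derivative_intros)+
     apply (simp add: power2_eq_square)
    using K apply (metis order_less_irrefl)
    done
  show ?thesis
    by (rule DERIV_cong[OF d]) (simp add: power2_eq_square algebra_simps)
qed

lemma L2:
  fixes c s :: real assumes "c > 0"
  shows "((\<lambda>s. arctan (s/c)/c) has_real_derivative 1/(s^2+c^2)) (at s within A)"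
proof -
  have d0: "((\<lambda>s. s/c) has_real_derivative 1/c) (at s within A)"
    using DERIV_cdivide[OF DERIV_ident, of c s A] by simp
  have d: "((\<lambda>s. arctan (s/c)/c) has_real_derivative inverse (1 + (s/c)^2) * (1/c) / c) (at s within A)"
    by (rule DERIV_cdivide[OF DERIV_chain'[OF d0 DERIV_arctan]])
  have e: "1 + (s/c)^2 = (s^2+c^2)/c^2" using assms by (simp add: field_simps)
  have K0: "s^2+c^2 > 0" using assms by (simp add: add_nonneg_pos)
  hence K: "s^2+c^2 \<noteq> 0" by (metis order_less_irrefl)
  have g: "\<And>K. K \<noteq> 0 \<Longrightarrow> inverse (K/c^2) * (1/c) / c = 1/K" using assms by (simp add: field_simps power2_eq_square)
  show ?thesis
    by (rule DERIV_cong[OF d]) (simp only: e g[OF K])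
qed

lemma L3:
  fixes c s :: real assumes "c > 0" "\<bar>s\<bar> < c"
  shows "((\<lambda>s. s/(c^2-s^2)) has_real_derivative (c^2+s^2)/(c^2-s^2)^2) (at s within A)"
proof -
  have L: "c^2-s^2 > 0"
  proof -
    have "\<bar>s\<bar> * \<bar>s\<bar> < c * c" using assms by (intro mult_strict_mono) auto
    thus ?thesis by (simp add: power2_eq_square)
  qed
  have d: "((\<lambda>s. s/(c^2-s^2)) has_real_derivative (1 * (c^2 - s^2) - s * (- (2 * s))) / ((c^2 - s^2) * (c^2 - s^2))) (at s within A)"
    apply (rule DERIV_divide)
      apply (rule DERIV_ident)
     apply (rule DERIV_cong)
      apply (rule derivative_intros)+
     apply (simp add: power2_eq_square)
    using L apply simp
    done
  show ?thesis
    by (rule DERIV_cong[OF d]) (simp add: power2_eq_square algebra_simps)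
qed

lemma L4:
  fixes c s :: real assumes "c > 0" "\<bar>s\<bar> < c"
  shows "((\<lambda>s. artanh (s/c)/c) has_real_derivative 1/(c^2-s^2)) (at s within A)"
proof -
  have d0: "((\<lambda>s. s/c) has_real_derivative 1/c) (at s within A)"
    using DERIV_cdivide[OF DERIV_ident, of c s A] by simp
  have h2: "\<bar>s/c\<bar> < 1" using assms by (simp add: abs_div)
  have d: "((\<lambda>s. artanh (s/c)/c) has_real_derivative (1 / (1 - (s/c)^2)) * (1/c) / c) (at s within A)"
    by (rule DERIV_cdivide[OF DERIV_chain'[OF d0 artanh_real_has_field_derivative[OF h2]]])
  have L: "c^2-s^2 > 0"
  proof -
    have "\<bar>s\<bar> * \<bar>s\<bar> < c * c" using assms by (intro mult_strict_mono) auto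
    thus ?thesis by (simp add: power2_eq_square)
  qed
  have e: "1 - (s/c)^2 = (c^2-s^2)/c^2" using assms by (simp add: field_simps)
  have g: "\<And>K. K \<noteq> 0 \<Longrightarrow> 1 / (K/c^2) * (1/c) / c = 1/K" using assms by (simp add: field_simps power2_eq_square)
  have L': "c^2-s^2 \<noteq> 0" using L by simp
  show ?thesis
    by (rule DERIV_cong[OF d]) (simp only: e g[OF L'])
qed
lemma beta_int:
  fixes k :: nat
  shows "((\<lambda>t::real. (t*(1-t))^(2*k)) has_integral (fact (2*k))^2 / fact (4*k+1)) {0..1}"
proof -
  have pos: "real (2*k) + 1 > 0" by simp
  have B: "((\<lambda>t. t powr (real (2*k) + 1 - 1) * (1 - t) powr (real (2*k) + 1 - 1)) has_integral
      Beta (real (2*k) + 1) (real (2*k) + 1)) {0..1}"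
    by (rule has_integral_Beta_real[OF pos pos])
  have "Beta (real (2*k) + 1) (real (2*k) + 1) = Gamma (1 + real (2*k)) * Gamma (1 + real (2*k)) / Gamma (1 + real (4*k+1))"
    unfolding Beta_def by (simp add: add_ac)
  also have "\<dots> = (fact (2*k))^2 / fact (4*k+1)"
    by (simp only: Gamma_fact power2_eq_square)
  finally have eq: "Beta (real (2*k) + 1) (real (2*k) + 1) = (fact (2*k))^2 / fact (4*k+1)" .
  show ?thesis
  proof (rule has_integral_spike_finite[of "{0,1}"])
    show "finite {0::real, 1}" by simp
    fix t :: real assume "t \<in> {0..1} - {0,1}"
    hence t: "0 < t" "t < 1" by auto
    have e: "real (2*k) + 1 - 1 = real (2*k)" by simp
    have p1: "t powr real (2*k) = t^(2*k)" by (rule powr_realpow[OF t(1)])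
    have p2: "(1-t) powr real (2*k) = (1-t)^(2*k)" using t by (intro powr_realpow) simp
    show "(t*(1-t))^(2*k) = t powr (real (2*k) + 1 - 1) * (1 - t) powr (real (2*k) + 1 - 1)"
      by (simp only: e p1 p2 power_mult_distrib)
  next
    show "((\<lambda>t. t powr (real (2*k) + 1 - 1) * (1 - t) powr (real (2*k) + 1 - 1)) has_integral
       (fact (2*k))^2 / fact (4*k+1)) {0..1}" using B eq by simp
  qed
qed

lemma coef_eq:
  fixes k :: nat and x :: real assumes "x > 0"
  shows "1 / (x ^ (2*k) * real ((4*k) choose (2*k))) = real (4*k+1) / x^(2*k) * ((fact (2*k))^2 / fact (4*k+1))"
proof -
  have C: "real ((4*k) choose (2*k)) = fact (4*k) / (fact (2*k) * fact (2*k))"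
    by (subst binomial_fact) (auto simp: mult_2)
  have F: "(fact (4*k+1) :: real) = real (4*k+1) * fact (4*k)"
    by simp
  have g: "\<And>n X Y Z f :: real. n \<noteq> 0 \<Longrightarrow> X \<noteq> 0 \<Longrightarrow> Z \<noteq> 0 \<Longrightarrow> f \<noteq> 0 \<Longrightarrow>
     1 / (X * (Z / (f * f))) = n / X * (f^2 / (n * Z))"
    by (simp add: field_simps power2_eq_square)
  show ?thesis unfolding C F
    by (rule g) (use assms in auto)
qed

lemma series4:
  fixes v :: real assumes "0 \<le> v" "v < 1"
  shows "(\<lambda>k. real (4*k+1) * v^k) sums (4/(1-v)^2 - 3/(1-v))"
proof -
  have a: "(\<lambda>k. of_nat (Suc k) * v^k) sums (1/(1-v)^2)"
    by (rule geometric_deriv_sums) (use assms in simp)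
  have b: "(\<lambda>k. v^k) sums (1/(1-v))"
    by (rule geometric_sums) (use assms in simp)
  have "(\<lambda>k. 4 * (of_nat (Suc k) * v^k) - 3 * v^k) sums (4 * (1/(1-v)^2) - 3 * (1/(1-v)))"
    by (intro sums_diff sums_mult a b)
  moreover have "\<And>k. 4 * (of_nat (Suc k) * v^k) - 3 * v^k = real (4*k+1) * v^k"
    by (simp add: algebra_simps)
  ultimately show ?thesis by simp
qed

lemma shift_deriv:
  fixes f :: "real \<Rightarrow> real"
  assumes "(f has_real_derivative D) (at (t - d))"
  shows "((\<lambda>t. f (t - d)) has_real_derivative D) (at t within A)"
proof -
  have "((\<lambda>t. t - d) has_real_derivative 1) (at t)"
    by (auto intro!: derivative_eq_intros)
  from DERIV_chain2[OF assms this] show ?thesis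
    by (simp add: has_field_derivative_at_within)
qed


lemma ratK:
  fixes K a x :: real assumes "K > 0" "a > 0"
  shows "x^2/(2*a^2) * ((2*a^2 - K)/K^2 + 1/K) = x^2/K^2"
proof -
  have "(2*a^2 - K)/K^2 + 1/K = 2*a^2/K^2" using assms by (simp add: field_simps power2_eq_square)
  thus ?thesis using assms by simp
qed

lemma alg_series:
  fixes x A :: real assumes "A > 0" "2*x - A > 0" "x > 0"
  shows "4/(A*(2*x-A)/x^2)^2 - 3/(A*(2*x-A)/x^2) = x^2/A^2 + x^2/(2*x-A)^2 - x/(2*A) - x/(2*(2*x-A))"
proof -
  define B where "B = 2*x - A"
  have B0: "B > 0" using assms by (simp add: B_def)
  have AB: "A + B = 2*x" by (simp add: B_def)
  have l1: "4/(A*B/x^2)^2 = 4*x^2*x^2/(A*B)^2" using assms B0 by (simp add: field_simps power2_eq_square)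
  have l2: "3/(A*B/x^2) = 3*x^2/(A*B)" using assms B0 by (simp add: field_simps)
  have r1: "x^2/A^2 + x^2/B^2 = x^2*(A^2+B^2)/(A*B)^2" using assms B0 by (simp add: field_simps power2_eq_square)
  have r2: "A^2+B^2 = 4*x^2 - 2*(A*B)"
  proof -
    have "A^2+B^2 = (A+B)^2 - 2*(A*B)" by (simp add: power2_eq_square algebra_simps)
    thus ?thesis unfolding AB by (simp add: power2_eq_square)
  qed
  have r3: "x/(2*A) + x/(2*B) = x*x/(A*B)"
  proof -
    have "x/(2*A) + x/(2*B) = x*(A+B)/(2*(A*B))" using assms B0 by (simp add: field_simps)
    thus ?thesis unfolding AB by simp
  qed
  have r4: "x^2*(4*x^2 - 2*(A*B))/(A*B)^2 = 4*x^2*x^2/(A*B)^2 - 2*x^2/(A*B)"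
    using assms B0 by (simp add: field_simps power2_eq_square)
  have "x^2/A^2 + x^2/B^2 - x/(2*A) - x/(2*B) = 4*x^2*x^2/(A*B)^2 - 2*x^2/(A*B) - x*x/(A*B)"
    using r1 r2 r3 r4 by (simp add: algebra_simps)
  also have "\<dots> = 4*x^2*x^2/(A*B)^2 - 3*x^2/(A*B)" by (simp add: power2_eq_square field_simps)
  finally show ?thesis unfolding l1 l2 B_def[symmetric] by simp
qed

theorem lemma4p1:
  fixes x :: real
  assumes "x > 1/4"
  shows "(\<lambda>k::nat. 1 / (x ^ (2*k) * real ((4*k) choose (2*k)))) sums
    (16 * x^2 / (16 * x^2 - 1)
     + 2 * x * (arccot (sqrt (4*x - 1)) / ((4*x - 1) * sqrt (4*x - 1))
              - arccoth (sqrt (4*x + 1)) / ((4*x + 1) * sqrt (4*x + 1))))"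
proof -
  have x0: "x > 0" using assms by simp
  define p where "p = sqrt (4*x - 1)"
  define q where "q = sqrt (4*x + 1)"
  have p0: "p > 0" unfolding p_def using assms by simp
  have q0: "q > 0" unfolding q_def using assms by simp
  have p2: "p^2 = 4*x - 1" unfolding p_def using assms by simp
  have q2: "q^2 = 4*x + 1" unfolding q_def using assms by simp
  have q1: "q > 1" unfolding q_def using assms by simp
  define a where "a = p/2"
  define b where "b = q/2"
  have a0: "a > 0" and b0: "b > 0" using p0 q0 by (simp_all add: a_def b_def)
  have a2: "a^2 = x - 1/4" using p2 by (simp add: a_def power_divide)
  have b2: "b^2 = x + 1/4" using q2 by (simp add: b_def power_divide)
  have bhalf: "b > 1/2" using q1 by (simp add: b_def)
  define A where "A = (\<lambda>t::real. x - t*(1-t))"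
  define B where "B = (\<lambda>t::real. x + t*(1-t))"
  define F where "F = (\<lambda>t. x^2/(A t)^2 + x^2/(B t)^2 - x/(2*A t) - x/(2*B t))"
  define G where "G = (\<lambda>t. x^2/(2*a^2) * ((t-1/2)/((t-1/2)^2+a^2) + arctan ((t-1/2)/a)/a)
      + x^2/(2*b^2) * ((t-1/2)/(b^2-(t-1/2)^2) + artanh ((t-1/2)/b)/b)
      - x/2 * (arctan ((t-1/2)/a)/a) - x/2 * (artanh ((t-1/2)/b)/b))"
  define V where "V = 16 * x^2 / (16 * x^2 - 1)
     + 2 * x * (arccot (sqrt (4*x - 1)) / ((4*x - 1) * sqrt (4*x - 1))
              - arccoth (sqrt (4*x + 1)) / ((4*x + 1) * sqrt (4*x + 1)))"
  have tq: "t*(1-t) \<le> 1/4" for t :: real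
  proof -
    have "(t-1/2)^2 = 1/4 - t*(1-t)" by (simp add: power2_eq_square algebra_simps)
    moreover have "(t-1/2)^2 \<ge> 0" by simp
    ultimately show ?thesis by linarith
  qed
  have deriv: "(G has_real_derivative F t) (at t within {0..1})" if t: "t \<in> {0..1}" for t
  proof -
    have st: "\<bar>t - 1/2\<bar> < b" using t bhalf by auto
    have d1: "((\<lambda>t. (t-1/2)/((t-1/2)^2+a^2)) has_real_derivative
        (a^2-(t-1/2)^2)/((t-1/2)^2+a^2)^2) (at t within {0..1})"
      by (rule shift_deriv[OF L1[OF a0]])
    have d2: "((\<lambda>t. arctan ((t-1/2)/a)/a) has_real_derivative 1/((t-1/2)^2+a^2)) (at t within {0..1})"
      by (rule shift_deriv[OF L2[OF a0]])
    have d3: "((\<lambda>t. (t-1/2)/(b^2-(t-1/2)^2)) has_real_derivative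
        (b^2+(t-1/2)^2)/(b^2-(t-1/2)^2)^2) (at t within {0..1})"
      by (rule shift_deriv[OF L3[OF b0 st]])
    have d4: "((\<lambda>t. artanh ((t-1/2)/b)/b) has_real_derivative 1/(b^2-(t-1/2)^2)) (at t within {0..1})"
      by (rule shift_deriv[OF L4[OF b0 st]])
    have D: "(G has_real_derivative (x^2/(2*a^2) * ((a^2-(t-1/2)^2)/((t-1/2)^2+a^2)^2 + 1/((t-1/2)^2+a^2))
        + x^2/(2*b^2) * ((b^2+(t-1/2)^2)/(b^2-(t-1/2)^2)^2 + 1/(b^2-(t-1/2)^2))
        - x/2 * (1/((t-1/2)^2+a^2)) - x/2 * (1/(b^2-(t-1/2)^2)))) (at t within {0..1})"
      unfolding G_def by (intro DERIV_diff DERIV_add DERIV_cmult d1 d2 d3 d4)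
    have sA: "(t-1/2)^2+a^2 = A t" unfolding A_def a2 by (simp add: power2_eq_square algebra_simps)
    have sB: "b^2-(t-1/2)^2 = B t" unfolding B_def b2 by (simp add: power2_eq_square algebra_simps)
    have At: "A t > 0" using tq[of t] assms unfolding A_def by auto
    have Bt: "B t > 0"
    proof -
      have "t*(1-t) \<ge> 0" using t by simp
      thus ?thesis using x0 unfolding B_def by linarith
    qed
    have i1: "x^2/(2*a^2) * ((a^2-(t-1/2)^2)/((t-1/2)^2+a^2)^2 + 1/((t-1/2)^2+a^2)) = x^2/(A t)^2"
    proof -
      have eq: "(a^2-(t-1/2)^2) = 2*a^2 - A t" using sA by simp
      show ?thesis unfolding eq sA using ratK[OF At a0] .
    qed
    have i2: "x^2/(2*b^2) * ((b^2+(t-1/2)^2)/(b^2-(t-1/2)^2)^2 + 1/(b^2-(t-1/2)^2)) = x^2/(B t)^2"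
    proof -
      have eq: "(b^2+(t-1/2)^2) = 2*b^2 - B t" using sB by simp
      show ?thesis unfolding eq sB using ratK[OF Bt b0] .
    qed
    show ?thesis using D unfolding i1 i2 unfolding sA sB F_def by simp
  qed
  have FG: "(F has_integral (G 1 - G 0)) {0..1}"
    by (rule fundamental_theorem_of_calculus) (auto simp: has_real_derivative_iff_has_vector_derivative[symmetric] intro: deriv)
  define T where "T = arctan (1/p)"
  define H where "H = artanh (1/q)"
  have e1: "(1 - 1/2)/a = 1/p" "(0 - 1/2)/a = -(1/p)" "(1 - 1/2)/b = 1/q" "(0 - 1/2)/b = -(1/q)"
    by (simp_all add: a_def b_def)
  have hq: "\<bar>1/q\<bar> < 1" using q1 by simp
  have v1: "(1::real) - 1/2 = 1/2" "(0::real) - 1/2 = -(1/2)" by simp_all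
  have k1: "(1/2)^2 + a^2 = x" "(-(1/2))^2 + a^2 = x" "b^2 - (1/2)^2 = x" "b^2 - (-(1/2))^2 = x"
    using a2 b2 by (simp_all add: power2_eq_square)
  have e2: "(1/2)/a = 1/p" "(-(1/2))/a = -(1/p)" "(1/2)/b = 1/q" "(-(1/2))/b = -(1/q)"
    by (simp_all add: a_def b_def)
  have GV: "G 1 - G 0 = x^2/(2*a^2) * (1/x) + x^2/(2*b^2) * (1/x)
        + T * (x^2/a^3 - x/a) + H * (x^2/b^3 - x/b)"
  proof -
    have "G 1 - G 0 = x^2/(2*a^2) * ((1/2)/x + T/a) + x^2/(2*b^2) * ((1/2)/x + H/b) - x/2*(T/a) - x/2*(H/b)
       - (x^2/(2*a^2) * ((-(1/2))/x + (-T)/a) + x^2/(2*b^2) * ((-(1/2))/x + (-H)/b) - x/2*((-T)/a) - x/2*((-H)/b))"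
      unfolding G_def v1 k1 e2 T_def H_def arctan_minus artanh_minus_real[OF hq] by simp
    also have "\<dots> = x^2/(2*a^2) * (1/x) + x^2/(2*b^2) * (1/x) + T * (x^2/a^3 - x/a) + H * (x^2/b^3 - x/b)"
      using a0 b0 x0 by (simp add: field_simps power3_eq_cube power2_eq_square)
    finally show ?thesis .
  qed
  have R1: "x^2/(2*a^2) * (1/x) = 2*x/(4*x-1)"
    unfolding a2 using assms x0 by (simp add: field_simps power2_eq_square)
  have R2: "x^2/(2*b^2) * (1/x) = 2*x/(4*x+1)"
    unfolding b2 using assms x0 by (simp add: field_simps power2_eq_square)
  have R3: "2*x/(4*x-1) + 2*x/(4*x+1) = 16 * x^2 / (16 * x^2 - 1)"
  proof -
    have m: "(4*x)*(4*x) > 1*1" using assms by (intro mult_strict_mono) auto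
    have "4*x - 1 \<noteq> 0" "4*x+1 \<noteq> 0" "16 * x^2 - 1 \<noteq> 0" using assms x0 m
      by (auto simp: power2_eq_square)
    thus ?thesis by (simp add: field_simps power2_eq_square)
  qed
  have xp: "x = (p^2+1)/4" using p2 by simp
  have xq: "x = (q^2-1)/4" using q2 by simp
  have C1: "x^2/a^3 - x/a = 2*x/((4*x-1)*p)"
  proof -
    have "x^2/a^3 - x/a = ((p^2+1)/4)^2/(p/2)^3 - ((p^2+1)/4)/(p/2)" by (subst (1 2) xp) (simp add: a_def)
    also have "\<dots> = 2*((p^2+1)/4)/(p^2*p)" using p0 by (simp add: field_simps power2_eq_square power3_eq_cube, (simp add: algebra_simps)?)
    also have "\<dots> = 2*x/((4*x-1)*p)" using xp p2 by simp
    finally show ?thesis .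
  qed
  have C2: "x^2/b^3 - x/b = -(2*x/((4*x+1)*q))"
  proof -
    have "x^2/b^3 - x/b = ((q^2-1)/4)^2/(q/2)^3 - ((q^2-1)/4)/(q/2)" by (subst (1 2) xq) (simp add: b_def)
    also have "\<dots> = -(2*((q^2-1)/4)/(q^2*q))" using q0 by (simp add: field_simps power2_eq_square power3_eq_cube, (simp add: algebra_simps)?)
    also have "\<dots> = -(2*x/((4*x+1)*q))" using xq q2 by simp
    finally show ?thesis .
  qed
  have GV2: "G 1 - G 0 = V"
    unfolding GV R1 R2 C1 C2 V_def arccot_def arccoth_def T_def H_def p_def[symmetric] q_def[symmetric] R3[symmetric]
    by (simp add: algebra_simps)
  have FV: "(F has_integral V) {0..1}" using FG GV2 by simp
  define c where "c = (\<lambda>k::nat. 1 / (x ^ (2*k) * real ((4*k) choose (2*k))))"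
  define tm where "tm = (\<lambda>k::nat. \<lambda>t::real. real (4*k+1) / x^(2*k) * (t*(1-t))^(2*k))"
  have tm_int: "(tm k has_integral c k) {0..1}" for k
    unfolding tm_def c_def coef_eq[OF x0]
    by (rule has_integral_mult_right[OF beta_int])
  have tm_nn: "tm k t \<ge> 0" for k t
    unfolding tm_def using x0 by (simp add: power_mult)
  have tm_sums: "(\<lambda>k. tm k t) sums F t" if t: "t \<in> {0..1}" for t
  proof -
    define v where "v = (t*(1-t)/x)^2"
    have w0: "t*(1-t)/x \<ge> 0" using t x0 by auto
    have w1: "t*(1-t)/x < 1" using tq[of t] assms x0 by (simp add: field_simps)
    have v0: "0 \<le> v" "v < 1" unfolding v_def using w0 w1
      by (auto simp: power_less_one_iff abs_square_less_1)
    have "(\<lambda>k. real (4*k+1) * v^k) sums (4/(1-v)^2 - 3/(1-v))" by (rule series4[OF v0])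
    moreover have "real (4*k+1) * v^k = tm k t" for k
      unfolding v_def tm_def by (simp add: power_mult[symmetric] power_divide mult.commute)
    moreover have "1 - v = A t * (2*x - A t) / x^2"
      unfolding v_def A_def using x0 by (simp add: field_simps power2_eq_square, (simp add: algebra_simps)?)
    moreover have "A t > 0" using tq[of t] assms t unfolding A_def by auto
    moreover have "2*x - A t > 0"
    proof -
      have "t*(1-t) \<ge> 0" using t by simp
      thus ?thesis using x0 unfolding A_def by linarith
    qed
    moreover have "B t = 2*x - A t" unfolding A_def B_def by simp
    ultimately show ?thesis unfolding F_def using alg_series[of "A t" x] x0 by simp
  qed
  define fn where "fn = (\<lambda>n t. \<Sum>k<n. tm k t)"
  have fn_int: "(fn n has_integral (\<Sum>k<n. c k)) {0..1}" for n
    unfolding fn_def by (intro has_integral_sum tm_int) auto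
  have mc: "F integrable_on {0..1} \<and> ((\<lambda>n. integral {0..1} (fn n)) \<longlongrightarrow> integral {0..1} F) sequentially"
  proof (rule monotone_convergence_increasing)
    show "fn n integrable_on {0..1}" for n using fn_int by blast
    show "fn n t \<le> fn (Suc n) t" for n t unfolding fn_def using tm_nn by simp
    show "(\<lambda>n. fn n t) \<longlonglongrightarrow> F t" if "t \<in> {0..1}" for t
      using tm_sums[OF that] unfolding fn_def sums_def .
    show "bounded (range (\<lambda>n. integral {0..1} (fn n)))"
      unfolding bounded_real
    proof (intro exI ballI)
      fix y assume "y \<in> range (\<lambda>n. integral {0..1} (fn n))"
      then obtain n where y: "y = integral {0..1} (fn n)" by auto
      have "y = (\<Sum>k<n. c k)" using y fn_int integral_unique by blast
      have y0: "y \<ge> 0" using has_integral_nonneg[OF fn_int[of n]] tm_nn integral_unique[OF fn_int[of n]] y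
        unfolding fn_def by (simp add: sum_nonneg)
      have "y \<le> V"
      proof -
        have "fn n t \<le> F t" if "t \<in> {0..1}" for t
          using sum_le_suminf[of "\<lambda>k. tm k t" "{..<n}"] tm_sums[OF that] tm_nn
          unfolding fn_def by (auto simp: sums_iff)
        thus ?thesis using has_integral_le[OF fn_int[of n] FV] y integral_unique[OF fn_int[of n]] by auto
      qed
      thus "\<bar>y\<bar> \<le> V" using y0 by simp
    qed
  qed
  have "(\<lambda>n. \<Sum>k<n. c k) \<longlonglongrightarrow> V"
    using mc integral_unique[OF FV] integral_unique[OF fn_int] by simp
  thus ?thesis unfolding sums_def c_def V_def .
qed

end
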